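(* Let $N\in\mathbb{N}$, $m\in\mathrm{Ran}[m_N]\setminus\{-1,1\}$, $\mu\in\mathbb{R}$ and $\eta>0$. There is a cutoff $N(m,\eta)\in\mathbb{N}$ such that for $N\ge N(m,\eta)$, \[ \left(\tfrac12-\eta\right)\frac{\ln(N+1)}{N}\le\frac{\mathcal{H}(\mu_{\mathrm{MC}}^{m;N}\,\|\,\mu_{\mathrm{C}}^{\mu;N})}{N}-F(m,\mu)\le\frac{\ln(N+1)}{N}, \] where $F(m,\mu)=\ln2+\ln\cosh\mu+\mu m+\frac{1+m}2\ln\frac{1+m}2+\frac{1-m}2\ln\frac{1-m}2$. Moreover, every pair $(m,\mu)\in(\mathrm{Ran}[m_N]\setminus\{-1,1\})\times\mathbb{R}$ with $m=-\tanh\mu$ satisfies $F(m,\mu)=0$, and there are no other solutions of $F(m,\mu)=0$ among such pairs.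
   Context: $\Lambda$ is a finite lattice with $N=|\Lambda|$ sites, $\mathcal{S}=\{-1,1\}^\Lambda$, magnetization $M[\phi]=\sum_{x\in\Lambda}\phi(x)$, and $m_N[\phi]=M[\phi]/N$; $\mathrm{Ran}[m_N]$ is its range. For $m\in\mathrm{Ran}[m_N]$, $\mathcal{S}_m=\{\phi: m_N[\phi]=m\}$ and $\mu_{\mathrm{MC}}^{m;N}$ is the uniform probability measure on $\mathcal{S}_m$. For $\mu\in\mathbb{R}$, $\mu_{\mathrm{C}}^{\mu;N}$ is the probability measure on $\mathcal{S}$ with weights proportional to $e^{-\mu M[\phi]}$. The relative entropy is $\mathcal{H}(\lambda_1\|\lambda_2)=\int d\lambda_1\ln\frac{d\lambda_1}{d\lambda_2}$ if $\lambda_1\ll\lambda_2$ and $+\infty$ otherwise. *)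

theory Defs
  imports "HOL-Probability.Probability"
begin

text \<open>Spin configurations on a finite lattice (site set) \<Lambda>: functions \<Lambda> \<rightarrow> {-1,1},
  represented extensionally (value 0 outside \<Lambda>).\<close>
definition spins :: "'a set \<Rightarrow> ('a \<Rightarrow> int) set" where
  "spins \<Lambda> = {\<phi>. (\<forall>x\<in>\<Lambda>. \<phi> x \<in> {-1, 1}) \<and> (\<forall>x. x \<notin> \<Lambda> \<longrightarrow> \<phi> x = 0)}"

definition magn :: "'a set \<Rightarrow> ('a \<Rightarrow> int) \<Rightarrow> real" where
  "magn \<Lambda> \<phi> = (\<Sum>x\<in>\<Lambda>. real_of_int (\<phi> x))"

definition magn_density :: "'a set \<Rightarrow> ('a \<Rightarrow> int) \<Rightarrow> real" where
  "magn_density \<Lambda> \<phi> = magn \<Lambda> \<phi> / real (card \<Lambda>)"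

definition magn_range :: "'a set \<Rightarrow> real set" where
  "magn_range \<Lambda> = magn_density \<Lambda> ` spins \<Lambda>"

definition spins_m :: "'a set \<Rightarrow> real \<Rightarrow> ('a \<Rightarrow> int) set" where
  "spins_m \<Lambda> m = {\<phi> \<in> spins \<Lambda>. magn_density \<Lambda> \<phi> = m}"

definition mu_MC :: "'a set \<Rightarrow> real \<Rightarrow> ('a \<Rightarrow> int) pmf" where
  "mu_MC \<Lambda> m = pmf_of_set (spins_m \<Lambda> m)"

definition mu_C :: "'a set \<Rightarrow> real \<Rightarrow> ('a \<Rightarrow> int) pmf" where
  "mu_C \<Lambda> \<mu> = embed_pmf (\<lambda>\<phi>. if \<phi> \<in> spins \<Lambda>
      then exp (- \<mu> * magn \<Lambda> \<phi>) / (\<Sum>\<psi>\<in>spins \<Lambda>. exp (- \<mu> * magn \<Lambda> \<psi>)) else 0)"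

definition rel_entropy :: "'b pmf \<Rightarrow> 'b pmf \<Rightarrow> ereal" where
  "rel_entropy p q = (if set_pmf p \<subseteq> set_pmf q
     then ereal (measure_pmf.expectation p (\<lambda>x. ln (pmf p x / pmf q x))) else \<infinity>)"

definition F_fun :: "real \<Rightarrow> real \<Rightarrow> real" where
  "F_fun m \<mu> = ln 2 + ln (cosh \<mu>) + \<mu> * m + (1 + m) / 2 * ln ((1 + m) / 2)
              + (1 - m) / 2 * ln ((1 - m) / 2)"

end

theory Submission
  imports Defs
begin


lemma ln_lower_aux:
  fixes x :: real assumes "0 \<le> x" shows "2*x/(2+x) \<le> ln (1+x)"
proof -
  let ?f = "\<lambda>x::real. ln (1+x) - 2*x/(2+x)"
  have "?f 0 \<le> ?f x"
  proof (rule DERIV_nonneg_imp_nondecreasing[OF assms])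
    fix y :: real assume y0: "0 \<le> y" and yx: "y \<le> x"
    note y = y0 yx
    have d1: "((\<lambda>x::real. ln (1+x)) has_real_derivative 1/(1+y)) (at y)"
      using y by (auto intro!: derivative_eq_intros)
    have d2: "((\<lambda>x::real. 2*x/(2+x)) has_real_derivative 4/(2+y)^2) (at y)"
      using y by (auto intro!: derivative_eq_intros simp: power2_eq_square)
    have "(?f has_real_derivative (1/(1+y) - 4/(2+y)^2)) (at y)"
      by (rule DERIV_diff[OF d1 d2])
    moreover have "1/(1+y) - 4/(2+y)^2 = y^2/((1+y)*(2+y)^2)"
    proof -
      have p: "1+y \<noteq> 0" "(2+y)^2 \<noteq> 0" using y by auto
      have "1/(1+y) - 4/(2+y)^2 = ((2+y)^2 - 4*(1+y))/((1+y)*(2+y)^2)"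
        using p by (simp add: diff_frac_eq)
      also have "(2+y)^2 - 4*(1+y) = y^2" by (simp add: power2_eq_square algebra_simps)
      finally show ?thesis .
    qed
    moreover have "y^2/((1+y)*(2+y)^2) \<ge> 0" using y by simp
    ultimately show "\<exists>d. (?f has_real_derivative d) (at y) \<and> 0 \<le> d" by metis
  qed
  then show ?thesis by simp
qed

lemma ln_upper_aux:
  fixes x :: real assumes "0 \<le> x" shows "ln (1+x) \<le> x - x^2/2 + x^3/3"
proof -
  let ?f = "\<lambda>x::real. x - x^2/2 + x^3/3 - ln (1+x)"
  have "?f 0 \<le> ?f x"
  proof (rule DERIV_nonneg_imp_nondecreasing[OF assms])
    fix y :: real assume y0: "0 \<le> y" and yx: "y \<le> x"
    note y = y0 yx
    have "(?f has_real_derivative (1 - y + y^2 - 1/(1+y))) (at y)"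
      using y by (auto intro!: derivative_eq_intros simp: field_simps power2_eq_square)
    moreover have "1 - y + y^2 - 1/(1+y) = y^3/(1+y)"
      using y by (simp add: field_simps power2_eq_square power3_eq_cube)
    moreover have "y^3/(1+y) \<ge> 0" using y by simp
    ultimately show "\<exists>d. (?f has_real_derivative d) (at y) \<and> 0 \<le> d" by metis
  qed
  then show ?thesis by simp
qed

definition st :: "nat \<Rightarrow> real" where
  "st n = ln (fact n) - (real n + 1/2) * ln (real n) + real n"

lemma st_step:
  assumes "n \<ge> 1"
  shows "st n - st (Suc n) = (real n + 1/2) * ln (1 + 1/real n) - 1"
proof -
  have A: "ln (fact (Suc n) :: real) = ln (real n + 1) + ln (fact n)"
    by (simp add: ln_mult del: of_nat_Suc)
  have "1 + 1/real n = (real n + 1) / real n" using assms by (simp add: field_simps)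
  then have B: "ln (1 + 1/real n) = ln (real n + 1) - ln (real n)"
    using assms by (subst \<open>1 + 1/real n = _\<close>) (rule ln_divide_pos; simp)
  have "st n - st (Suc n) = ln (fact n) - (real n + 1/2) * ln (real n) + real n
     - (ln (real n + 1) + ln (fact n) - (real n + 1 + 1/2) * ln (real n + 1) + real n + 1)"
    unfolding st_def A[symmetric] by simp
  also have "\<dots> = (real n + 1/2) * (ln (real n + 1) - ln (real n)) - 1"
    by (simp add: algebra_simps)
  finally show ?thesis unfolding B .
qed

lemma st_step_bounds:
  assumes "n \<ge> 1"
  shows "0 \<le> st n - st (Suc n)" "st n - st (Suc n) \<le> 1/(2*real n*(real n+1))"
proof -
  have n: "real n \<ge> 1" using assms by simp
  have l: "2*(1/real n)/(2+1/real n) \<le> ln (1 + 1/real n)"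
    by (rule ln_lower_aux) simp
  have "(real n + 1/2) * (2*(1/real n)/(2+1/real n)) = 1"
    using n by (simp add: field_simps)
  moreover have "(real n + 1/2) * (2*(1/real n)/(2+1/real n)) \<le> (real n + 1/2) * ln (1 + 1/real n)"
    by (rule mult_left_mono[OF l]) simp
  ultimately have "1 \<le> (real n + 1/2) * ln (1 + 1/real n)" by simp
  then show "0 \<le> st n - st (Suc n)" using st_step[OF assms] by simp
  have u: "ln (1 + 1/real n) \<le> 1/real n - (1/real n)^2/2 + (1/real n)^3/3"
    by (rule ln_upper_aux) simp
  have "(real n + 1/2) * ln (1 + 1/real n) \<le> (real n + 1/2) * (1/real n - (1/real n)^2/2 + (1/real n)^3/3)"
    using u n by (intro mult_left_mono) auto
  also have "\<dots> = 1 + 1/(12*real n^2) + 1/(6*real n^3)"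
    using n by (simp add: field_simps power2_eq_square power3_eq_cube)
  also have "\<dots> \<le> 1 + 1/(2*real n*(real n+1))"
  proof -
    have "1/(12*real n^2) + 1/(6*real n^3) \<le> 1/(4*real n^2)"
    proof -
      have "real n^2 \<le> real n^3" using n by (simp add: power2_eq_square power3_eq_cube)
      then have "1/(6*real n^3) \<le> 1/(6*real n^2)"
        using n by (intro divide_left_mono) auto
      moreover have "1/(12*real n^2) + 1/(6*real n^2) = 1/(4*real n^2)" using n by simp
      ultimately show ?thesis by linarith
    qed
    also have "\<dots> \<le> 1/(2*real n*(real n+1))"
      using n by (intro divide_left_mono mult_pos_pos) (auto simp: power2_eq_square algebra_simps)
    finally show ?thesis by simp
  qed
  finally show "st n - st (Suc n) \<le> 1/(2*real n*(real n+1))" using st_step[OF assms] by simp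
qed

lemma st_bounds:
  assumes "n \<ge> 1" shows "1/2 + 1/(2*real n) \<le> st n \<and> st n \<le> 1"
  using assms
proof (induction n rule: dec_induct)
  case base
  show ?case by (simp add: st_def)
next
  case (step n)
  have n: "real n \<ge> 1" using step by simp
  have e: "1/(2*real n) - 1/(2*real n*(real n+1)) = 1/(2*real (Suc n))"
    using n by (simp add: divide_simps)
  show ?case using st_step_bounds[OF step(1)] step(3) e by linarith
qed

lemma ln_fact_st: "ln (fact n :: real) = st n + (real n + 1/2) * ln (real n) - real n"
  by (simp add: st_def)

lemma binom_D:
  fixes k N :: nat
  assumes "0 < k" "k < N"
  defines "D \<equiv> real N * ln (real N) - real k * ln (real k) - real (N-k) * ln (real (N-k))
                - ln (real (N choose k))"
  shows "ln (real k * real (N-k) / real N) / 2 \<le> D"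
        "D \<le> ln (real k * real (N-k) / real N) / 2 + 3/2"
proof -
  have kN: "k \<le> N" using assms by simp
  have C: "real (N choose k) = fact N / (fact k * fact (N-k))" by (rule binomial_fact[OF kN])
  have lnC: "ln (real (N choose k)) = ln (fact N) - ln (fact k) - ln (fact (N-k))"
    unfolding C by (simp add: ln_divide_pos ln_mult)
  have l: "ln (real k * real (N-k) / real N) = ln (real k) + ln (real (N-k)) - ln (real N)"
    using assms by (simp add: ln_divide_pos ln_mult)
  have e: "D = ln (real k * real (N-k) / real N) / 2 + st k + st (N-k) - st N"
    unfolding D_def lnC ln_fact_st l using kN by (simp add: algebra_simps of_nat_diff add_divide_distrib diff_divide_distrib)
  have b1: "1/2 + 1/(2*real k) \<le> st k \<and> st k \<le> 1" using st_bounds[of k] assms by simp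
  have b2: "1/2 + 1/(2*real (N-k)) \<le> st (N-k) \<and> st (N-k) \<le> 1" using st_bounds[of "N-k"] assms by simp
  have b3: "1/2 + 1/(2*real N) \<le> st N \<and> st N \<le> 1" using st_bounds[of N] assms by simp
  have p: "0 \<le> 1/(2*real k)" "0 \<le> 1/(2*real (N-k))" "0 \<le> 1/(2*real N)" by auto
  have g1: "\<And>(D::real) L a b c x y. D = L/2 + a + b - c \<Longrightarrow> 0 \<le> x \<Longrightarrow> 0 \<le> y \<Longrightarrow> 1/2 + x \<le> a \<and> a \<le> 1 \<Longrightarrow> 1/2 + y \<le> b \<and> b \<le> 1 \<Longrightarrow> c \<le> 1 \<Longrightarrow> L/2 \<le> D" by linarith
  show "ln (real k * real (N-k) / real N) / 2 \<le> D" using g1[OF e p(1) p(2) b1 b2] b3 by blast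
  have g2: "\<And>(D::real) L a b c z. D = L/2 + a + b - c \<Longrightarrow> 0 \<le> z \<Longrightarrow> a \<le> 1 \<Longrightarrow> b \<le> 1 \<Longrightarrow> 1/2 + z \<le> c \<Longrightarrow> D \<le> L/2 + 3/2" by linarith
  show "D \<le> ln (real k * real (N-k) / real N) / 2 + 3/2" using g2[OF e p(3)] b1 b2 b3 by blast
qed



definition sp_of :: "'a set \<Rightarrow> 'a set \<Rightarrow> 'a \<Rightarrow> int" where
  "sp_of L A x = (if x \<in> A then 1 else if x \<in> L then -1 else 0)"

lemma sp_bij: "bij_betw (sp_of L) (Pow L) (spins L)"
proof (rule bij_betw_byWitness[where f' = "\<lambda>\<phi>. {x\<in>L. \<phi> x = 1}"])
  show "\<forall>a\<in>Pow L. {x \<in> L. sp_of L a x = 1} = a" by (auto simp: sp_of_def)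
  show "\<forall>a'\<in>spins L. sp_of L {x \<in> L. a' x = 1} = a'"
    by (auto simp: sp_of_def spins_def fun_eq_iff)
  show "sp_of L ` Pow L \<subseteq> spins L" by (auto simp: sp_of_def spins_def)
  show "(\<lambda>\<phi>. {x \<in> L. \<phi> x = 1}) ` spins L \<subseteq> Pow L" by auto
qed

lemma magn_sp:
  assumes "finite L" "A \<subseteq> L"
  shows "magn L (sp_of L A) = 2 * real (card A) - real (card L)"
proof -
  have "magn L (sp_of L A) = (\<Sum>x\<in>L. if x \<in> A then 1 else -1)"
    unfolding magn_def by (intro sum.cong) (auto simp: sp_of_def)
  also have "\<dots> = real (card (L \<inter> A)) - real (card (L - A))"
    using assms(1) by (simp add: sum.If_cases Diff_eq)
  also have "L \<inter> A = A" using assms by auto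
  also have "real (card (L - A)) = real (card L) - real (card A)"
    using assms by (simp add: card_Diff_subset finite_subset of_nat_diff card_mono)
  finally show ?thesis by simp
qed

lemma sum_pow_card:
  fixes c :: real
  assumes "finite L"
  shows "(\<Sum>A\<in>Pow L. c ^ card A) = (1 + c) ^ card L"
  using assms
proof (induction L rule: finite_induct)
  case empty then show ?case by simp
next
  case (insert a F)
  have inj: "inj_on (insert a) (Pow F)"
  proof (rule inj_onI)
    fix x y assume xy: "x\<in>Pow F" "y\<in>Pow F" "insert a x = insert a y"
    then have "a\<notin>x" "a\<notin>y" using insert(2) by auto
    then show "x=y" by (metis Diff_insert_absorb xy(3))
  qed
  have disj: "Pow F \<inter> insert a ` Pow F = {}" using insert(2) by auto
  have fin: "finite (Pow F)" using insert(1) by simp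
  have "(\<Sum>A\<in>Pow (insert a F). c ^ card A) = (\<Sum>A\<in>Pow F. c ^ card A) + (\<Sum>A\<in>insert a ` Pow F. c ^ card A)"
    unfolding Pow_insert using fin disj by (intro sum.union_disjoint) auto
  also have "(\<Sum>A\<in>insert a ` Pow F. c ^ card A) = (\<Sum>A\<in>Pow F. c ^ card (insert a A))"
    by (rule sum.reindex[OF inj, unfolded comp_def])
  also have "\<dots> = (\<Sum>A\<in>Pow F. c * c ^ card A)"
    using insert(1,2) by (intro sum.cong refl) (auto simp: finite_subset card_insert_if)
  finally show ?case using insert by (simp add: sum_distrib_left[symmetric] algebra_simps)
qed

lemma Z_eq:
  assumes "finite L"
  shows "(\<Sum>\<psi>\<in>spins L. exp (- \<mu> * magn L \<psi>)) = (2 * cosh \<mu>) ^ card L"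
proof -
  have "(\<Sum>\<psi>\<in>spins L. exp (- \<mu> * magn L \<psi>)) = (\<Sum>A\<in>Pow L. exp (- \<mu> * magn L (sp_of L A)))"
    by (rule sum.reindex_bij_betw[OF sp_bij, symmetric])
  also have "\<dots> = (\<Sum>A\<in>Pow L. exp (\<mu> * real (card L)) * exp (-2*\<mu>) ^ card A)"
  proof (intro sum.cong refl)
    fix A assume "A \<in> Pow L"
    then have e: "magn L (sp_of L A) = 2 * real (card A) - real (card L)" using magn_sp assms by blast
    show "exp (- \<mu> * magn L (sp_of L A)) = exp (\<mu> * real (card L)) * exp (-2*\<mu>) ^ card A"
      unfolding e by (simp add: exp_add[symmetric] exp_of_nat_mult[symmetric] algebra_simps)
  qed
  also have "\<dots> = exp (\<mu> * real (card L)) * (1 + exp (-2*\<mu>)) ^ card L"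
    using assms by (simp add: sum_distrib_left[symmetric] sum_pow_card)
  also have "\<dots> = (exp \<mu> * (1 + exp (-2*\<mu>))) ^ card L"
    by (simp add: power_mult_distrib exp_of_nat_mult[symmetric] mult.commute)
  also have "exp \<mu> * (1 + exp (-2*\<mu>)) = 2 * cosh \<mu>"
    by (simp add: cosh_def algebra_simps exp_add[symmetric])
  finally show ?thesis .
qed



lemma spins_m_eq:
  assumes "finite L" "card L > 0" "m = (2 * real k - real (card L)) / real (card L)"
  shows "spins_m L m = sp_of L ` {B. B \<subseteq> L \<and> card B = k}"
proof -
  have N: "real (card L) > 0" using assms by simp
  have "spins_m L m = sp_of L ` {B \<in> Pow L. magn_density L (sp_of L B) = m}"
    unfolding spins_m_def using bij_betw_imp_surj_on[OF sp_bij, of L] by auto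
  also have "{B \<in> Pow L. magn_density L (sp_of L B) = m} = {B. B \<subseteq> L \<and> card B = k}"
  proof (intro set_eqI iffI)
    fix B assume "B \<in> {B \<in> Pow L. magn_density L (sp_of L B) = m}"
    then have B: "B \<subseteq> L" "(2 * real (card B) - real (card L)) / real (card L) = m"
      using magn_sp[OF assms(1)] by (auto simp: magn_density_def)
    then have "2 * real (card B) - real (card L) = 2 * real k - real (card L)"
      using assms(3) N by (simp add: divide_cancel_right)
    then show "B \<in> {B. B \<subseteq> L \<and> card B = k}" using B by simp
  next
    fix B assume "B \<in> {B. B \<subseteq> L \<and> card B = k}"
    then show "B \<in> {B \<in> Pow L. magn_density L (sp_of L B) = m}"
      using magn_sp[OF assms(1)] assms(3) by (auto simp: magn_density_def)
  qed
  finally show ?thesis .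
qed

lemma card_spins_m:
  assumes "finite L" "card L > 0" "m = (2 * real k - real (card L)) / real (card L)"
  shows "card (spins_m L m) = card L choose k"
proof -
  have "inj_on (sp_of L) {B. B \<subseteq> L \<and> card B = k}"
    using bij_betw_imp_inj_on[OF sp_bij, of L] by (rule inj_on_subset) auto
  then show ?thesis unfolding spins_m_eq[OF assms] using card_image n_subsets[OF assms(1)] by metis
qed

lemma pmf_mu_C:
  assumes "finite L"
  shows "pmf (mu_C L \<mu>) \<phi> = (if \<phi> \<in> spins L then exp (- \<mu> * magn L \<phi>) / (2 * cosh \<mu>) ^ card L else 0)"
proof -
  have fin: "finite (spins L)" using bij_betw_finite[OF sp_bij, of L] assms by simp
  let ?Z = "(\<Sum>\<psi>\<in>spins L. exp (- \<mu> * magn L \<psi>))"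
  have Z: "?Z = (2 * cosh \<mu>) ^ card L" by (rule Z_eq[OF assms])
  have Zp: "?Z > 0" unfolding Z by simp
  let ?f = "\<lambda>\<phi>. if \<phi> \<in> spins L then exp (- \<mu> * magn L \<phi>) / ?Z else 0"
  have "pmf (embed_pmf ?f) \<phi> = ?f \<phi>"
  proof (rule pmf_embed_pmf)
    show "\<And>x. 0 \<le> ?f x" using Zp by auto
    have "(\<integral>\<^sup>+x. ennreal (?f x) \<partial>count_space UNIV) = (\<Sum>x\<in>spins L. ennreal (?f x))"
      using fin by (intro nn_integral_count_space') auto
    also have "\<dots> = ennreal (\<Sum>x\<in>spins L. ?f x)"
      using Zp by (intro sum_ennreal) auto
    also have "(\<Sum>x\<in>spins L. ?f x) = (\<Sum>x\<in>spins L. exp (- \<mu> * magn L x) / ?Z)"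
      by (intro sum.cong) auto
    also have "\<dots> = 1" using Zp by (simp add: sum_divide_distrib[symmetric])
    finally show "(\<integral>\<^sup>+x. ennreal (?f x) \<partial>count_space UNIV) = 1" by simp
  qed
  then show ?thesis unfolding mu_C_def Z by simp
qed

lemma entropy_formula:
  assumes "finite L" "card L = N" "N > 0" "k \<le> N" "m = (2 * real k - real N) / real N"
  shows "rel_entropy (mu_MC L m) (mu_C L \<mu>) =
     ereal (real N * ln 2 + real N * ln (cosh \<mu>) + \<mu> * real N * m - ln (real (N choose k)))"
proof -
  let ?S = "spins_m L m"
  have cS: "card ?S = N choose k" using card_spins_m[of L m k] assms by simp
  have cSp: "card ?S > 0" using cS assms by simp
  then have finS: "finite ?S" and neS: "?S \<noteq> {}" using card_gt_0_iff by blast+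
  have Sin: "\<And>\<phi>. \<phi> \<in> ?S \<Longrightarrow> \<phi> \<in> spins L \<and> magn L \<phi> = real N * m"
    using assms(2,3) by (auto simp: spins_m_def magn_density_def)
  have sub: "set_pmf (mu_MC L m) \<subseteq> set_pmf (mu_C L \<mu>)"
    unfolding mu_MC_def set_pmf_of_set[OF neS finS]
    using Sin by (auto simp: set_pmf_iff pmf_mu_C[OF assms(1)])
  have trm: "ln (pmf (mu_MC L m) \<phi> / pmf (mu_C L \<mu>) \<phi>) =
      real N * ln 2 + real N * ln (cosh \<mu>) + \<mu> * real N * m - ln (real (N choose k))"
    if "\<phi> \<in> ?S" for \<phi>
  proof -
    have "pmf (mu_MC L m) \<phi> / pmf (mu_C L \<mu>) \<phi> =
        (1 / real (N choose k)) / (exp (- \<mu> * (real N * m)) / (2 * cosh \<mu>) ^ N)"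
      using Sin[OF that] that neS finS cS assms(2)
      by (simp add: mu_MC_def pmf_mu_C[OF assms(1)])
    also have "\<dots> = (2 * cosh \<mu>) ^ N * exp (\<mu> * real N * m) / real (N choose k)"
      by (simp add: exp_minus field_simps)
    also have "ln \<dots> = ln ((2 * cosh \<mu>) ^ N) + ln (exp (\<mu> * real N * m)) - ln (real (N choose k))"
      using cSp cS by (simp add: ln_divide_pos ln_mult)
    also have "\<dots> = real N * ln 2 + real N * ln (cosh \<mu>) + \<mu> * real N * m - ln (real (N choose k))"
      by (simp add: ln_realpow ln_mult algebra_simps)
    finally show ?thesis .
  qed
  have "measure_pmf.expectation (mu_MC L m) (\<lambda>x. ln (pmf (mu_MC L m) x / pmf (mu_C L \<mu>) x))
      = (\<Sum>x\<in>?S. ln (pmf (mu_MC L m) x / pmf (mu_C L \<mu>) x)) / card ?S"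
    unfolding mu_MC_def[of L m] by (rule integral_pmf_of_set[OF neS finS])
  also have "\<dots> = (\<Sum>x\<in>?S. real N * ln 2 + real N * ln (cosh \<mu>) + \<mu> * real N * m - ln (real (N choose k))) / card ?S"
    using trm by (simp cong: sum.cong)
  also have "\<dots> = real N * ln 2 + real N * ln (cosh \<mu>) + \<mu> * real N * m - ln (real (N choose k))"
    using cSp by simp
  finally show ?thesis unfolding rel_entropy_def using sub by simp
qed



lemma F_zero_iff:
  fixes m \<mu> :: real
  assumes "\<bar>m\<bar> < 1"
  shows "F_fun m \<mu> = 0 \<longleftrightarrow> m = - tanh \<mu>"
proof -
  define u where "u = (1+m)/2"
  define v where "v = (1-m)/2"
  define S where "S = exp \<mu> + exp (-\<mu>)"
  define b where "b = exp (-\<mu>) / S"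
  define a where "a = exp \<mu> / S"
  have up: "u > 0" and vp: "v > 0" using assms by (auto simp: u_def v_def)
  have Sp: "S > 0" by (simp add: S_def add_pos_pos)
  have bp: "b > 0" and ap: "a > 0" using Sp by (auto simp: a_def b_def)
  have ab: "a + b = 1" unfolding a_def b_def add_divide_distrib[symmetric] using Sp by (simp add: S_def)
  have uv: "u + v = 1" by (simp add: u_def v_def field_simps)
  have S2: "S = 2 * cosh \<mu>" by (simp add: S_def cosh_def)
  have lnS: "ln S = ln 2 + ln (cosh \<mu>)" unfolding S2 by (simp add: ln_mult)
  have lnb: "ln b = -\<mu> - ln S" using Sp by (simp add: b_def ln_divide_pos)
  have lna: "ln a = \<mu> - ln S" using Sp by (simp add: a_def ln_divide_pos)
  have T1: "u * ln (b/u) = u * ln b - u * ln u" using bp up by (simp add: ln_divide_pos algebra_simps)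
  have T2: "v * ln (a/v) = v * ln a - v * ln v" using ap vp by (simp add: ln_divide_pos algebra_simps)
  have F: "F_fun m \<mu> = - (u * ln (b/u) + v * ln (a/v))"
    unfolding F_fun_def T1 T2 lnb lna lnS u_def[symmetric] v_def[symmetric]
    using uv by (simp add: u_def v_def algebra_simps) (simp add: field_simps)
  have i1: "u * ln (b/u) \<le> u * (b/u - 1)" using up bp by (intro mult_left_mono ln_le_minus_one) auto
  have i2: "v * ln (a/v) \<le> v * (a/v - 1)" using ap vp by (intro mult_left_mono ln_le_minus_one) auto
  have e1: "u * (b/u - 1) = b - u" using up by (simp add: field_simps)
  have e2: "v * (a/v - 1) = a - v" using vp by (simp add: field_simps)
  have th: "tanh \<mu> = (exp \<mu> - exp (-\<mu>)) / S"
  proof -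
    have "tanh \<mu> = ((exp \<mu> - exp (-\<mu>)) / 2) / ((exp \<mu> + exp (-\<mu>)) / 2)"
      by (simp add: tanh_def sinh_def cosh_def)
    also have "\<dots> = (exp \<mu> - exp (-\<mu>)) / S"
      unfolding S_def using Sp[unfolded S_def] by (simp add: field_simps)
    finally show ?thesis .
  qed
  have tanh: "- tanh \<mu> = b - a"
    unfolding th a_def b_def diff_divide_distrib[symmetric] by (simp add: minus_divide_left)
  have mba: "m = - tanh \<mu> \<longleftrightarrow> b = u"
    unfolding tanh using ab by (auto simp: u_def field_simps)
  show ?thesis
  proof
    assume "F_fun m \<mu> = 0"
    then have "u * ln (b/u) = u * (b/u - 1)" using F i1 i2 e1 e2 ab uv by linarith
    then have "ln (b/u) = b/u - 1" using up by simp
    then have "b/u = 1" using ln_eq_minus_one[of "b/u"] bp up by simp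
    then show "m = - tanh \<mu>" using mba up by simp
  next
    assume "m = - tanh \<mu>"
    then have "b = u" using mba by simp
    then have "a = v" using ab uv by simp
    then show "F_fun m \<mu> = 0" unfolding F using \<open>b = u\<close> up vp by simp
  qed
qed

lemma range_form:
  assumes "finite L" "m \<in> magn_range L"
  obtains B where "B \<subseteq> L" "m = magn_density L (sp_of L B)"
proof -
  obtain \<phi> where "\<phi> \<in> spins L" "m = magn_density L \<phi>" using assms by (auto simp: magn_range_def)
  moreover obtain B where "B \<in> Pow L" "\<phi> = sp_of L B"
    using bij_betw_imp_surj_on[OF sp_bij, of L] \<open>\<phi> \<in> spins L\<close> by blast
  ultimately show ?thesis using that by auto
qed

lemma range_abs:
  assumes "finite L" "m \<in> magn_range L"
  shows "\<bar>m\<bar> \<le> 1"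
proof -
  obtain B where B: "B \<subseteq> L" "m = magn_density L (sp_of L B)" using range_form assms by blast
  have cB: "card B \<le> card L" using B assms card_mono by blast
  show ?thesis
  proof (cases "card L = 0")
    case True then show ?thesis using B by (simp add: magn_density_def)
  next
    case False
    then have "m = (2 * real (card B) - real (card L)) / real (card L)"
      using B magn_sp[OF assms(1) B(1)] by (simp add: magn_density_def)
    then have e: "m * real (card L) = 2 * real (card B) - real (card L)" using False by simp
    have p: "real (card L) > 0" using False by simp
    have "m * real (card L) \<le> 1 * real (card L)" using e cB by simp
    then have "m \<le> 1" using p by (rule mult_right_le_imp_le)
    moreover have "(-1) * real (card L) \<le> m * real (card L)" using e by simp
    then have "-1 \<le> m" using p by (rule mult_right_le_imp_le)
    ultimately show ?thesis by (simp add: abs_le_iff)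
  qed
qed



lemma part1_bound:
  fixes m \<eta> :: real and k N :: nat
  assumes eta: "\<eta> > 0" and kN: "0 < k" "k < N"
    and m: "m = (2 * real k - real N) / real N"
    and N0: "real N \<ge> 27" "real N \<ge> exp ((ln 2 / 2 - ln ((1 - m^2)/4) / 2) / \<eta>)"
    and h: "h = real N * ln 2 + real N * ln (cosh \<mu>) + \<mu> * real N * m - ln (real (N choose k))"
  shows "(1/2 - \<eta>) * ln (real N + 1) / real N \<le> h / real N - F_fun m \<mu> \<and>
         h / real N - F_fun m \<mu> \<le> ln (real N + 1) / real N"
proof -
  define D where "D = real N * ln (real N) - real k * ln (real k) - real (N-k) * ln (real (N-k))
                - ln (real (N choose k))"
  have Np: "real N > 0" using kN by simp
  have kp: "real k > 0" and lp: "real (N-k) > 0" using kN by auto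
  have u: "(1+m)/2 = real k / real N" using Np by (simp add: m field_simps)
  have v: "(1-m)/2 = real (N-k) / real N" using Np kN by (simp add: m field_simps of_nat_diff)
  have lu: "ln (real k / real N) = ln (real k) - ln (real N)" using kp Np by (simp add: ln_divide_pos)
  have lv: "ln (real (N-k) / real N) = ln (real (N-k)) - ln (real N)" using lp Np by (simp add: ln_divide_pos)
  have kl: "real k + real (N-k) = real N" using kN by (simp add: of_nat_diff)
  have "h - real N * F_fun m \<mu> = D"
  proof -
    have "real N * F_fun m \<mu> = real N * ln 2 + real N * ln (cosh \<mu>) + \<mu> * real N * m
       + real k * (ln (real k) - ln (real N)) + real (N-k) * (ln (real (N-k)) - ln (real N))"
      unfolding F_fun_def u v lu lv using Np by (simp add: algebra_simps)
    then show ?thesis unfolding h D_def using kl by (simp add: algebra_simps)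
  qed
  then have hD: "h / real N - F_fun m \<mu> = D / real N" using Np by (simp add: field_simps)
  have klN: "real k * real (N-k) / real N = real N * ((1 - m^2)/4)"
  proof -
    have "real k * real (N-k) / real N = real N * ((1+m)/2) * ((1-m)/2)"
      unfolding u v using Np by (simp add: field_simps)
    then show ?thesis by (simp add: power2_eq_square field_simps)
  qed
  have mp: "(1 - m^2)/4 > 0"
  proof -
    have "(1+m)/2 > 0" "(1-m)/2 > 0" unfolding u v using kp lp Np by auto
    then have "((1+m)/2) * ((1-m)/2) > 0" by simp
    then show ?thesis by (simp add: power2_eq_square field_simps)
  qed
  have Db: "ln (real k * real (N-k) / real N) / 2 \<le> D"
           "D \<le> ln (real k * real (N-k) / real N) / 2 + 3/2"
    using binom_D[OF kN] unfolding D_def by auto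
  have lnkl: "ln (real k * real (N-k) / real N) = ln (real N) + ln ((1 - m^2)/4)"
    unfolding klN using Np mp by (rule ln_mult_pos)
  have lnN1: "ln (real N + 1) \<le> ln 2 + ln (real N)"
  proof -
    have "ln (real N + 1) \<le> ln (2 * real N)" using Np N0(1) by simp
    then show ?thesis using Np by (simp add: ln_mult)
  qed
  have lnN2: "ln (real N) \<le> ln (real N + 1)" using Np by simp
  define C0 where "C0 = ln 2 / 2 - ln ((1 - m^2)/4) / 2"
  have "exp (C0 / \<eta>) < real N + 1" using N0(2) unfolding C0_def by simp
  then have "C0 / \<eta> < ln (real N + 1)" using ln_less_cancel_iff[of "exp (C0 / \<eta>)" "real N + 1"] Np by simp
  then have etaC: "C0 < \<eta> * ln (real N + 1)" using eta by (simp add: field_simps)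
  have low: "(1/2 - \<eta>) * ln (real N + 1) \<le> D"
    using Db(1) lnkl lnN1 etaC unfolding C0_def by (simp add: algebra_simps)
  have e3: "exp (3::real) \<le> real N + 1"
  proof -
    have "exp (3::real) = exp 1 ^ 3" by (simp add: exp_of_nat_mult[symmetric])
    also have "\<dots> \<le> 3 ^ 3" by (rule power_mono[OF exp_le]) simp
    finally show ?thesis using N0(1) by simp
  qed
  have "3 \<le> ln (real N + 1)" using ln_le_cancel_iff[of "exp 3" "real N + 1"] e3 Np by simp
  have up: "D \<le> ln (real N + 1)"
  proof -
    have "ln (real k * real (N-k) / real N) \<le> ln (real N)"
    proof -
      have "real k * real (N-k) / real N \<le> real N"
      proof -
        have "real k * real (N-k) \<le> real N * real N" using kN by (intro mult_mono) auto
        then show ?thesis using Np by (simp add: divide_le_eq)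
      qed
      then show ?thesis using kp lp Np by simp
    qed
    then show ?thesis using Db(2) lnN2 \<open>3 \<le> ln (real N + 1)\<close> by linarith
  qed
  show ?thesis unfolding hD using low up Np by (simp add: divide_right_mono)
qed



theorem proposition3p6:
  fixes m \<eta> :: real
  shows "(\<eta> > 0 \<longrightarrow> (\<exists>N0::nat. \<forall>N\<ge>N0. \<forall>(\<Lambda>::'a set) \<mu>::real.
            finite \<Lambda> \<and> card \<Lambda> = N \<and> m \<in> magn_range \<Lambda> - {-1, 1} \<longrightarrow>
            (\<exists>h. rel_entropy (mu_MC \<Lambda> m) (mu_C \<Lambda> \<mu>) = ereal h \<and>
               (1/2 - \<eta>) * ln (real N + 1) / real N \<le> h / real N - F_fun m \<mu> \<and>
               h / real N - F_fun m \<mu> \<le> ln (real N + 1) / real N))) \<and>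
         (\<forall>(\<Lambda>::'a set) (m'::real) (\<mu>::real). finite \<Lambda> \<and> m' \<in> magn_range \<Lambda> - {-1, 1} \<longrightarrow>
            (F_fun m' \<mu> = 0 \<longleftrightarrow> m' = - tanh \<mu>))"
proof (intro conjI impI allI)
  assume eta: "\<eta> > 0"
  define X where "X = exp ((ln 2 / 2 - ln ((1 - m^2)/4) / 2) / \<eta>)"
  define N0 where "N0 = max 27 (nat \<lceil>X\<rceil>)"
  show "\<exists>N0::nat. \<forall>N\<ge>N0. \<forall>(\<Lambda>::'a set) \<mu>::real.
            finite \<Lambda> \<and> card \<Lambda> = N \<and> m \<in> magn_range \<Lambda> - {-1, 1} \<longrightarrow>
            (\<exists>h. rel_entropy (mu_MC \<Lambda> m) (mu_C \<Lambda> \<mu>) = ereal h \<and>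
               (1/2 - \<eta>) * ln (real N + 1) / real N \<le> h / real N - F_fun m \<mu> \<and>
               h / real N - F_fun m \<mu> \<le> ln (real N + 1) / real N)"
  proof (intro exI[of _ N0] allI impI)
    fix N :: nat and L :: "'a set" and \<mu> :: real
    assume NN0: "N0 \<le> N" and H: "finite L \<and> card L = N \<and> m \<in> magn_range L - {-1, 1}"
    have fin: "finite L" and cL: "card L = N" and mr: "m \<in> magn_range L" and m1: "m \<noteq> 1" "m \<noteq> -1"
      using H by auto
    have N27: "real N \<ge> 27" using NN0 unfolding N0_def by simp
    have NX: "real N \<ge> X"
    proof -
      have "X \<le> real_of_int \<lceil>X\<rceil>" by (rule le_of_int_ceiling)
      also have "\<dots> \<le> real (nat \<lceil>X\<rceil>)" by simp
      also have "\<dots> \<le> real N" using NN0 unfolding N0_def by simp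
      finally show ?thesis .
    qed
    have Np: "N > 0" using N27 by simp
    obtain B where B: "B \<subseteq> L" "m = magn_density L (sp_of L B)" using range_form[OF fin mr] by blast
    define k where "k = card B"
    have kN: "k \<le> N" using B(1) fin cL card_mono unfolding k_def by blast
    have mk: "m = (2 * real k - real N) / real N"
      using B magn_sp[OF fin B(1)] cL unfolding k_def by (simp add: magn_density_def)
    have k0: "k \<noteq> 0"
    proof
      assume "k = 0" then have "m = -1" using mk Np by simp
      then show False using m1 by simp
    qed
    have kN': "k \<noteq> N"
    proof
      assume "k = N" then have "m = 1" using mk Np by simp
      then show False using m1 by simp
    qed
    have ent: "rel_entropy (mu_MC L m) (mu_C L \<mu>) =
       ereal (real N * ln 2 + real N * ln (cosh \<mu>) + \<mu> * real N * m - ln (real (N choose k)))"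
      by (rule entropy_formula[OF fin cL Np kN mk])
    have bd: "(1/2 - \<eta>) * ln (real N + 1) / real N \<le> (real N * ln 2 + real N * ln (cosh \<mu>) + \<mu> * real N * m - ln (real (N choose k))) / real N - F_fun m \<mu> \<and>
         (real N * ln 2 + real N * ln (cosh \<mu>) + \<mu> * real N * m - ln (real (N choose k))) / real N - F_fun m \<mu> \<le> ln (real N + 1) / real N"
      by (rule part1_bound[OF eta _ _ mk N27 NX[unfolded X_def] refl]) (use k0 kN kN' in auto)
    show "\<exists>h. rel_entropy (mu_MC L m) (mu_C L \<mu>) = ereal h \<and>
               (1/2 - \<eta>) * ln (real N + 1) / real N \<le> h / real N - F_fun m \<mu> \<and>
               h / real N - F_fun m \<mu> \<le> ln (real N + 1) / real N"
      using ent bd by blast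
  qed
next
  fix L :: "'a set" and m' \<mu> :: real
  assume H: "finite L \<and> m' \<in> magn_range L - {-1, 1}"
  then have "\<bar>m'\<bar> \<le> 1" using range_abs by blast
  then have "\<bar>m'\<bar> < 1" using H by (auto simp: abs_le_iff abs_less_iff)
  then show "F_fun m' \<mu> = 0 \<longleftrightarrow> m' = - tanh \<mu>" by (rule F_zero_iff)
qed

end
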